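(* There exists a (computable) constant $\delta_0>0$ such that for every diagonal physical $Q=\operatorname{diag}(\lambda_1,\lambda_2,\lambda_3)$ with $-\tfrac13<\lambda_1\le\lambda_2\le\lambda_3<\tfrac23$, $\lambda_1+\lambda_2+\lambda_3=0$ and $\lambda_2+\tfrac13<\delta_0$, setting $\nu_1=-(2\mu_1+\mu_2)$, $\nu_2=-(\mu_1+2\mu_2)$ and $A(\phi)=\nu_1\cos^2\phi+\nu_2\sin^2\phi$, one has $$\frac1\pi\int_0^{2\pi}\frac{\mathrm d\phi}{A(\phi)}\le\int_{\mathbb S^2}e^{-\nu_1x^2-\nu_2y^2}\,\mathrm dS\le\frac{\pi^2}{4}\int_0^{2\pi}\frac{\mathrm d\phi}{A(\phi)},$$ $$\frac4{\pi^3}\int_0^{2\pi}\frac{\cos^2\phi}{A^2(\phi)}\,\mathrm d\phi\le\int_{\mathbb S^2}x^2e^{-\nu_1x^2-\nu_2y^2}\,\mathrm dS\le\frac{\pi^4}{16}\int_0^{2\pi}\frac{\cos^2\phi}{A^2(\phi)}\,\mathrm d\phi,$$ $$\frac4{\pi^3}\int_0^{2\pi}\frac{\sin^2\phi}{A^2(\phi)}\,\mathrm d\phi\le\int_{\mathbb S^2}y^2e^{-\nu_1x^2-\nu_2y^2}\,\mathrm dS\le\frac{\pi^4}{16}\int_0^{2\pi}\frac{\sin^2\phi}{A^2(\phi)}\,\mathrm d\phi.$$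
   Context: Points of the unit sphere $\mathbb S^2$ are written $(x,y,z)$, and $\mathrm dS$ is surface measure. For a physical $Q$ (symmetric traceless with all eigenvalues in $(-\tfrac13,\tfrac23)$) the Ball–Majumdar potential is $f(Q)=\inf\int_{\mathbb S^2}\rho\ln\rho\,\mathrm dS$ over even probability densities $\rho$ with $\int(\mathbf n\otimes\mathbf n-\tfrac13I_3)\rho\,\mathrm dS=Q$. For diagonal physical $Q=\operatorname{diag}(\lambda_1,\lambda_2,\lambda_3)$ this infimum is attained by $\rho_Q(x,y,z)=\exp(\mu_1x^2+\mu_2y^2+\mu_3z^2)/Z$, $Z=\int_{\mathbb S^2}\exp(\mu_1x^2+\mu_2y^2+\mu_3z^2)\,\mathrm dS$, where the Lagrange multipliers $\mu_1,\mu_2,\mu_3\in\mathbb R$ satisfy $\mu_1+\mu_2+\mu_3=0$ and $\int x^2\rho_Q\,\mathrm dS=\lambda_1+\tfrac13$, $\int y^2\rho_Q\,\mathrm dS=\lambda_2+\tfrac13$, $\int z^2\rho_Q\,\mathrm dS=\lambda_3+\tfrac13$. *)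

theory Defs
  imports "HOL-Analysis.Analysis"
begin

text \<open>Surface integral over the unit sphere S^2 with respect to surface measure dS,
  written out in spherical coordinates
  (x,y,z) = (sin t cos p, sin t sin p, cos t), dS = sin t dt dp,
  t in [0,pi], p in [0,2 pi].\<close>
definition S2_integral :: "(real \<Rightarrow> real \<Rightarrow> real \<Rightarrow> real) \<Rightarrow> real" where
  "S2_integral f =
     integral ({0..pi} \<times> {0..2*pi})
       (\<lambda>(t, p). f (sin t * cos p) (sin t * sin p) (cos t) * sin t)"

text \<open>Ball--Majumdar Lagrange multipliers for Q = diag(l1,l2,l3): m1+m2+m3 = 0 and
  the second moments of rho_Q = exp(m1 x^2 + m2 y^2 + m3 z^2)/Z are l_i + 1/3.\<close>
definition BM_multipliers :: "real \<Rightarrow> real \<Rightarrow> real \<Rightarrow> real \<Rightarrow> real \<Rightarrow> real \<Rightarrow> bool" where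
  "BM_multipliers l1 l2 l3 m1 m2 m3 \<longleftrightarrow>
     (let Z = S2_integral (\<lambda>x y z. exp (m1 * x\<^sup>2 + m2 * y\<^sup>2 + m3 * z\<^sup>2)) in
       m1 + m2 + m3 = 0 \<and>
       S2_integral (\<lambda>x y z. x\<^sup>2 * exp (m1 * x\<^sup>2 + m2 * y\<^sup>2 + m3 * z\<^sup>2) / Z) = l1 + 1/3 \<and>
       S2_integral (\<lambda>x y z. y\<^sup>2 * exp (m1 * x\<^sup>2 + m2 * y\<^sup>2 + m3 * z\<^sup>2) / Z) = l2 + 1/3 \<and>
       S2_integral (\<lambda>x y z. z\<^sup>2 * exp (m1 * x\<^sup>2 + m2 * y\<^sup>2 + m3 * z\<^sup>2) / Z) = l3 + 1/3)"

end

theory Submission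
  imports Defs
begin

abbreviation "rect \<equiv> {0..pi} \<times> {0..2*pi::real}"

lemma rect_cbox: "rect = cbox (0,0) (pi, 2*pi)"
  by (subst cbox_Pair_eq) (simp only: cbox_interval)

lemma fub_p:
  fixes f :: "real \<Rightarrow> real \<Rightarrow> real"
  assumes "continuous_on rect (\<lambda>(t,p). f t p)"
  shows "integral rect (\<lambda>(t,p). f t p) = integral {0..2*pi} (\<lambda>p. integral {0..pi} (\<lambda>t. f t p))"
proof -
  have c: "continuous_on (cbox (0,0) (pi, 2*pi)) (\<lambda>(t,p). f t p)" using assms rect_cbox by simp
  have "integral rect (\<lambda>(t,p). f t p) = integral (cbox 0 pi) (\<lambda>t. integral (cbox 0 (2*pi)) (\<lambda>p. f t p))"
    unfolding rect_cbox by (subst integral_prod_continuous[OF c]) simp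
  also have "\<dots> = integral (cbox 0 (2*pi)) (\<lambda>p. integral (cbox 0 pi) (\<lambda>t. f t p))"
    by (rule integral_swap_continuous[OF c])
  finally show ?thesis by (simp add: cbox_interval)
qed

lemma fub_t:
  fixes f :: "real \<Rightarrow> real \<Rightarrow> real"
  assumes "continuous_on rect (\<lambda>(t,p). f t p)"
  shows "integral rect (\<lambda>(t,p). f t p) = integral {0..pi} (\<lambda>t. integral {0..2*pi} (\<lambda>p. f t p))"
proof -
  have c: "continuous_on (cbox (0,0) (pi, 2*pi)) (\<lambda>(t,p). f t p)" using assms rect_cbox by simp
  have "integral rect (\<lambda>(t,p). f t p) = integral (cbox 0 pi) (\<lambda>t. integral (cbox 0 (2*pi)) (\<lambda>p. f t p))"
    unfolding rect_cbox by (subst integral_prod_continuous[OF c]) simp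
  then show ?thesis by (simp add: cbox_interval)
qed

lemma rect_integrable:
  fixes f :: "real \<times> real \<Rightarrow> real"
  assumes "continuous_on rect f"
  shows "f integrable_on rect"
  using assms unfolding rect_cbox by (rule integrable_continuous)

lemma rect_le:
  fixes f g :: "real \<Rightarrow> real \<Rightarrow> real"
  assumes "continuous_on rect (\<lambda>(t,p). f t p)" "continuous_on rect (\<lambda>(t,p). g t p)"
    "\<And>t p. t \<in> {0..pi} \<Longrightarrow> p \<in> {0..2*pi} \<Longrightarrow> f t p \<le> g t p"
  shows "integral rect (\<lambda>(t,p). f t p) \<le> integral rect (\<lambda>(t,p). g t p)"
  by (rule integral_le[OF rect_integrable[OF assms(1)] rect_integrable[OF assms(2)]]) (use assms(3) in auto)

lemma test_cont: "continuous_on rect (\<lambda>(t,p). exp (- (n1 * (cos p)\<^sup>2 + n2 * (sin p)\<^sup>2) * (1 - cos t)) * sin t)"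
  unfolding case_prod_unfold by (intro continuous_intros)

lemma ftc_real:
  fixes F f :: "real \<Rightarrow> real"
  assumes "a \<le> b" "\<And>x. x \<in> {a..b} \<Longrightarrow> (F has_real_derivative f x) (at x)"
  shows "integral {a..b} f = F b - F a"
proof -
  have "(f has_integral (F b - F a)) {a..b}"
    apply (rule fundamental_theorem_of_calculus[OF assms(1)])
    using assms(2) by (simp add: has_real_derivative_iff_has_vector_derivative[symmetric] has_field_derivative_at_within)
  then show ?thesis by (rule integral_unique)
qed

lemma int_c:
  assumes "b > 0"
  shows "integral {0..pi} (\<lambda>t. exp (- b * (1 - cos t)) * sin t) = (1 - exp (-2*b)) / b"
proof -
  have "integral {0..pi} (\<lambda>t. exp (- b * (1 - cos t)) * sin t)
      = (\<lambda>t. - exp (- b * (1 - cos t)) / b) pi - (\<lambda>t. - exp (- b * (1 - cos t)) / b) 0"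
    apply (rule ftc_real, simp)
    using assms by (auto intro!: derivative_eq_intros simp: field_simps)
  then show ?thesis using assms by (simp add: field_simps)
qed

lemma int_d:
  assumes "b > 0"
  shows "integral {0..pi} (\<lambda>t. exp (- b * (1 + cos t)) * sin t) = (1 - exp (-2*b)) / b"
proof -
  have "integral {0..pi} (\<lambda>t. exp (- b * (1 + cos t)) * sin t)
      = (\<lambda>t. exp (- b * (1 + cos t)) / b) pi - (\<lambda>t. exp (- b * (1 + cos t)) / b) 0"
    apply (rule ftc_real, simp)
    using assms by (auto intro!: derivative_eq_intros simp: field_simps)
  then show ?thesis using assms by (simp add: field_simps)
qed

definition GG :: "real \<Rightarrow> real \<Rightarrow> real" where
  "GG b v = exp (- b * v) * (v\<^sup>2 / b + (2 / b\<^sup>2 - 2 / b) * v + 2 / b^3 - 2 / b\<^sup>2)"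

lemma GG_deriv: "b > 0 \<Longrightarrow> (GG b has_real_derivative (v * (2 - v) * exp (- b * v))) (at v)"
  unfolding GG_def
  apply (rule derivative_eq_intros refl | simp)+
  by (simp add: field_simps power2_eq_square power3_eq_cube)

lemma sin3: fixes x :: real shows "(sin x)^3 = (1 - cos x) * (2 - (1 - cos x)) * sin x"
  "(sin x)^3 = (1 + cos x) * (2 - (1 + cos x)) * sin x"
proof -
  have "(sin x)^3 = sin x * (sin x)^2" by (simp add: power3_eq_cube power2_eq_square)
  also have "\<dots> = sin x * (1 - (cos x)^2)" by (simp add: sin_squared_eq)
  finally have e: "(sin x)^3 = sin x * (1 - (cos x)^2)" .
  show "(sin x)^3 = (1 - cos x) * (2 - (1 - cos x)) * sin x"
    "(sin x)^3 = (1 + cos x) * (2 - (1 + cos x)) * sin x"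
    unfolding e by (simp_all add: algebra_simps power2_eq_square)
qed

lemma int_e:
  assumes "b > 0"
  shows "integral {0..pi} (\<lambda>t. (sin t)^3 * exp (- b * (1 - cos t))) = GG b 2 - GG b 0"
proof -
  have d: "((\<lambda>t. GG b (1 - cos t)) has_real_derivative (sin x)^3 * exp (- b * (1 - cos x))) (at x)" for x
  proof -
    have "((\<lambda>t. GG b (1 - cos t)) has_real_derivative
       ((1 - cos x) * (2 - (1 - cos x)) * exp (- b * (1 - cos x))) * sin x) (at x)"
      by (rule DERIV_chain'[OF _ GG_deriv[OF assms]]) (auto intro!: derivative_eq_intros)
    then show ?thesis by (simp add: sin3(1) mult_ac)
  qed
  have "integral {0..pi} (\<lambda>t. (sin t)^3 * exp (- b * (1 - cos t)))
      = (\<lambda>t. GG b (1 - cos t)) pi - (\<lambda>t. GG b (1 - cos t)) 0"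
    by (rule ftc_real, simp, rule d)
  then show ?thesis by simp
qed

lemma int_f:
  assumes "b > 0"
  shows "integral {0..pi} (\<lambda>t. (sin t)^3 * exp (- b * (1 + cos t))) = GG b 2 - GG b 0"
proof -
  have d: "((\<lambda>t. - GG b (1 + cos t)) has_real_derivative (sin x)^3 * exp (- b * (1 + cos x))) (at x)" for x
  proof -
    have "((\<lambda>t. GG b (1 + cos t)) has_real_derivative
       ((1 + cos x) * (2 - (1 + cos x)) * exp (- b * (1 + cos x))) * (- sin x)) (at x)"
      by (rule DERIV_chain'[OF _ GG_deriv[OF assms]]) (auto intro!: derivative_eq_intros)
    then have "((\<lambda>t. - GG b (1 + cos t)) has_real_derivative
       - (((1 + cos x) * (2 - (1 + cos x)) * exp (- b * (1 + cos x))) * (- sin x))) (at x)"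
      by (rule DERIV_minus)
    then show ?thesis by (simp add: sin3(2) mult_ac)
  qed
  have "integral {0..pi} (\<lambda>t. (sin t)^3 * exp (- b * (1 + cos t)))
      = (\<lambda>t. - GG b (1 + cos t)) pi - (\<lambda>t. - GG b (1 + cos t)) 0"
    by (rule ftc_real, simp, rule d)
  then show ?thesis by simp
qed

lemma GG_val: "b > 0 \<Longrightarrow> GG b 2 - GG b 0 = 2/b\<^sup>2 - 2/b^3 + exp (-2*b) * (2/b\<^sup>2 + 2/b^3)"
  unfolding GG_def by (simp add: field_simps power2_eq_square power3_eq_cube)

lemma rect_upper:
  fixes f g :: "real \<Rightarrow> real \<Rightarrow> real" and G H :: "real \<Rightarrow> real"
  assumes "continuous_on rect (\<lambda>(t,p). f t p)" "continuous_on rect (\<lambda>(t,p). g t p)"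
    "\<And>t p. t \<in> {0..pi} \<Longrightarrow> p \<in> {0..2*pi} \<Longrightarrow> f t p \<le> g t p"
    "\<And>p. p \<in> {0..2*pi} \<Longrightarrow> integral {0..pi} (\<lambda>t. g t p) = G p"
    "\<And>p. p \<in> {0..2*pi} \<Longrightarrow> G p \<le> H p"
    "continuous_on {0..2*pi} G" "continuous_on {0..2*pi} H"
  shows "integral rect (\<lambda>(t,p). f t p) \<le> integral {0..2*pi} H"
proof -
  have "integral rect (\<lambda>(t,p). f t p) \<le> integral rect (\<lambda>(t,p). g t p)"
    by (rule rect_le[OF assms(1-3)])
  also have "\<dots> = integral {0..2*pi} (\<lambda>p. integral {0..pi} (\<lambda>t. g t p))"
    by (rule fub_p[OF assms(2)])
  also have "\<dots> = integral {0..2*pi} G"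
    by (rule integral_cong) (use assms(4) in auto)
  also have "\<dots> \<le> integral {0..2*pi} H"
    by (rule integral_le[OF integrable_continuous_interval[OF assms(6)] integrable_continuous_interval[OF assms(7)]])
       (use assms(5) in auto)
  finally show ?thesis .
qed

lemma rect_lower:
  fixes f g :: "real \<Rightarrow> real \<Rightarrow> real" and G H :: "real \<Rightarrow> real"
  assumes "continuous_on rect (\<lambda>(t,p). f t p)" "continuous_on rect (\<lambda>(t,p). g t p)"
    "\<And>t p. t \<in> {0..pi} \<Longrightarrow> p \<in> {0..2*pi} \<Longrightarrow> g t p \<le> f t p"
    "\<And>p. p \<in> {0..2*pi} \<Longrightarrow> integral {0..pi} (\<lambda>t. g t p) = G p"
    "\<And>p. p \<in> {0..2*pi} \<Longrightarrow> H p \<le> G p"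
    "continuous_on {0..2*pi} G" "continuous_on {0..2*pi} H"
  shows "integral {0..2*pi} H \<le> integral rect (\<lambda>(t,p). f t p)"
proof -
  have "integral {0..2*pi} H \<le> integral {0..2*pi} G"
    by (rule integral_le[OF integrable_continuous_interval[OF assms(7)] integrable_continuous_interval[OF assms(6)]])
       (use assms(5) in auto)
  also have "\<dots> = integral {0..2*pi} (\<lambda>p. integral {0..pi} (\<lambda>t. g t p))"
    by (rule integral_cong) (use assms(4) in auto)
  also have "\<dots> = integral rect (\<lambda>(t,p). g t p)"
    by (rule fub_p[OF assms(2), symmetric])
  also have "\<dots> \<le> integral rect (\<lambda>(t,p). f t p)"
    by (rule rect_le[OF assms(2,1,3)])
  finally show ?thesis .
qed

lemma sin_facts:
  fixes t :: real
  shows "(sin t)^2 = (1 - cos t) * (1 + cos t)" "0 \<le> 1 - cos t" "0 \<le> 1 + cos t"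
    "(sin t)^2 \<le> 2 * (1 - cos t)"
proof -
  show e: "(sin t)^2 = (1 - cos t) * (1 + cos t)" by (simp add: sin_squared_eq algebra_simps power2_eq_square)
  show a: "0 \<le> 1 - cos t" "0 \<le> 1 + cos t" using cos_le_one[of t] cos_ge_minus_one[of t] by linarith+
  have "(1 - cos t) * (1 + cos t) \<le> (1 - cos t) * 2" using a cos_le_one[of t] by (intro mult_left_mono) auto
  then show "(sin t)^2 \<le> 2 * (1 - cos t)" using e by simp
qed

lemma exp_lower:
  fixes t A :: real assumes "0 \<le> A"
  shows "exp (- (2*A) * (1 - cos t)) \<le> exp (- A * (sin t)^2)"
proof -
  have "A * (sin t)^2 \<le> A * (2 * (1 - cos t))" using sin_facts(4)[of t] assms by (rule mult_left_mono)
  then show ?thesis by (simp add: algebra_simps)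
qed

lemma exp_upper:
  fixes t A :: real assumes "0 \<le> A"
  shows "exp (- A * (sin t)^2) \<le> exp (- A * (1 - cos t)) + exp (- A * (1 + cos t))"
proof (cases "cos t \<ge> 0")
  case True
  have "1 - cos t \<le> (sin t)^2" unfolding sin_facts(1)
    using sin_facts(2)[of t] True by (metis add_increasing2 mult_cancel_left1 mult_left_mono order_refl)
  then have "A * (1 - cos t) \<le> A * (sin t)^2" using assms by (rule mult_left_mono)
  then have "exp (- A * (sin t)^2) \<le> exp (- A * (1 - cos t))" by simp
  then show ?thesis by (smt (verit) exp_gt_zero)
next
  case False
  have "1 + cos t \<le> (sin t)^2" unfolding sin_facts(1)
    using sin_facts(3)[of t] False
    by (smt (verit, ccfv_SIG) mult_le_cancel_right1)
  then have "A * (1 + cos t) \<le> A * (sin t)^2" using assms by (rule mult_left_mono)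
  then have "exp (- A * (sin t)^2) \<le> exp (- A * (1 + cos t))" by simp
  then show ?thesis by (smt (verit) exp_gt_zero)
qed

lemma A_ge:
  fixes n1 n2 p :: real assumes "3 \<le> n1" "3 \<le> n2"
  shows "3 \<le> n1 * (cos p)\<^sup>2 + n2 * (sin p)\<^sup>2"
proof -
  have "3 * (cos p)\<^sup>2 \<le> n1 * (cos p)\<^sup>2" "3 * (sin p)\<^sup>2 \<le> n2 * (sin p)\<^sup>2"
    using assms by (auto intro: mult_right_mono)
  then show ?thesis using sin_cos_squared_add[of p] by linarith
qed

lemma expo_eq: "- n1 * (sin t * cos p)\<^sup>2 - n2 * (sin t * sin p)\<^sup>2
   = - (n1 * (cos p)\<^sup>2 + n2 * (sin p)\<^sup>2) * (sin t)\<^sup>2" for n1 n2 t p :: real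
  by (simp add: power_mult_distrib algebra_simps)

lemma int_add_cont:
  fixes f g :: "real \<Rightarrow> real"
  assumes "continuous_on {a..b} f" "continuous_on {a..b} g"
  shows "integral {a..b} (\<lambda>t. f t + g t) = integral {a..b} f + integral {a..b} g"
  by (rule integral_add[OF integrable_continuous_interval[OF assms(1)] integrable_continuous_interval[OF assms(2)]])

lemma pi_facts: "9 \<le> pi\<^sup>2" "27 \<le> pi^3" "81 \<le> pi^4"
proof -
  have "3 \<le> pi" using pi_gt3 by simp
  then show "9 \<le> pi\<^sup>2" "27 \<le> pi^3" "81 \<le> pi^4"
    using power_mono[of 3 pi 2] power_mono[of 3 pi 3] power_mono[of 3 pi 4] by auto
qed

lemma num1: fixes A :: real assumes "3 \<le> A" shows "2*(1-exp(-2*A))/A \<le> pi\<^sup>2/4 * (1/A)"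
proof -
  have e1: "2*(1-exp(-2*A)) \<le> 2" by simp
  have e2: "2 \<le> pi\<^sup>2/4" using pi_facts(1) by simp
  have "2*(1-exp(-2*A)) \<le> pi\<^sup>2/4" using e1 e2 by linarith
  then have "2*(1-exp(-2*A))/A \<le> (pi\<^sup>2/4)/A" using assms by (intro divide_right_mono) auto
  then show ?thesis by simp
qed

lemma num2: fixes A :: real assumes "3 \<le> A" shows "1/pi * (1/A) \<le> (1 - exp(-2*(2*A)))/(2*A)"
proof -
  have "exp (4*A) \<ge> 1 + 4*A" by (rule exp_ge_add_one_self)
  then have "exp (4*A) \<ge> 13" using assms by linarith
  then have "exp(-(4*A)) \<le> 1/13" by (simp add: exp_minus field_simps)
  then have "1 - exp(-2*(2*A)) \<ge> 12/13" by simp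
  moreover have "2/pi \<le> 2/3" by (rule divide_left_mono) (use pi_gt3 in auto)
  ultimately have "2/pi \<le> 1 - exp(-2*(2*A))" by linarith
  then have "(2/pi)/(2*A) \<le> (1 - exp(-2*(2*A)))/(2*A)" using assms by (intro divide_right_mono) auto
  moreover have "1/pi * (1/A) = (2/pi)/(2*A)" by simp
  ultimately show ?thesis by linarith
qed

lemma num3: fixes A :: real assumes "3 \<le> A" shows "2*(GG A 2 - GG A 0) \<le> pi^4/16 * (1/A\<^sup>2)"
proof -
  have A: "A > 0" using assms by simp
  have "exp (2*A) \<ge> 1 + 2*A" by (rule exp_ge_add_one_self)
  then have "exp (2*A) \<ge> A + 1" using assms by linarith
  then have e: "exp(-2*A) * (A+1) \<le> 1" by (simp add: exp_minus field_simps)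
  have "exp (-2*A) * (2/A\<^sup>2 + 2/A^3) = (exp(-2*A) * (A+1)) * (2/A^3)"
    using A by (simp add: field_simps power2_eq_square power3_eq_cube)
  also have "\<dots> \<le> 2/A^3" by (rule mult_left_le_one_le) (use e A in auto)
  finally have "GG A 2 - GG A 0 \<le> 2/A\<^sup>2" using GG_val[OF A] by simp
  moreover have "4/A\<^sup>2 \<le> (pi^4/16)/A\<^sup>2"
    using pi_facts(3) A by (intro divide_right_mono) auto
  ultimately show ?thesis by simp
qed

lemma num4: fixes A :: real assumes "3 \<le> A" shows "4/pi^3 * (1/A\<^sup>2) \<le> GG (2*A) 2 - GG (2*A) 0"
proof -
  define b where "b = 2*A"
  have b: "b \<ge> 6" using assms b_def by simp
  have "0 \<le> exp (-2*b) * (2/b\<^sup>2 + 2/b^3)" using b by simp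
  then have g: "2/b\<^sup>2 - 2/b^3 \<le> GG b 2 - GG b 0" using GG_val[of b] b by simp
  have "16/pi^3 \<le> 16/27" by (rule divide_left_mono) (use pi_facts(2) in auto)
  moreover have "2/b \<le> 1/3" using b by (simp add: field_simps)
  ultimately have "16/pi^3 \<le> 2 - 2/b" by linarith
  then have "(16/pi^3) * (1/b\<^sup>2) \<le> (2 - 2/b) * (1/b\<^sup>2)" by (rule mult_right_mono) simp
  also have "\<dots> = 2/b\<^sup>2 - 2/b^3" using b by (simp add: field_simps power2_eq_square power3_eq_cube)
  finally have "(16/pi^3) * (1/b\<^sup>2) \<le> GG b 2 - GG b 0" using g by linarith
  moreover have "(16/pi^3) * (1/b\<^sup>2) = 4/pi^3 * (1/A\<^sup>2)" unfolding b_def by (simp add: power2_eq_square field_simps)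
  ultimately show ?thesis unfolding b_def by (simp add: ac_simps)
qed

lemma S0_bounds:
  fixes n1 n2 :: real
  assumes "3 \<le> n1" "3 \<le> n2"
  shows "1/pi * integral {0..2*pi} (\<lambda>p. 1 / (n1 * (cos p)\<^sup>2 + n2 * (sin p)\<^sup>2))
           \<le> S2_integral (\<lambda>x y z. exp (- n1 * x\<^sup>2 - n2 * y\<^sup>2))"
    "S2_integral (\<lambda>x y z. exp (- n1 * x\<^sup>2 - n2 * y\<^sup>2))
           \<le> pi\<^sup>2/4 * integral {0..2*pi} (\<lambda>p. 1 / (n1 * (cos p)\<^sup>2 + n2 * (sin p)\<^sup>2))"
proof -
  define A where "A = (\<lambda>p. n1 * (cos p)\<^sup>2 + n2 * (sin p)\<^sup>2)"
  have A3: "3 \<le> A p" for p unfolding A_def by (rule A_ge[OF assms])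
  have A0: "A p \<noteq> 0" for p using A3[of p] by linarith
  have Ac: "continuous_on S A" for S unfolding A_def by (intro continuous_intros)
  have eq: "S2_integral (\<lambda>x y z. exp (- n1 * x\<^sup>2 - n2 * y\<^sup>2))
      = integral rect (\<lambda>(t,p). exp (- A p * (sin t)\<^sup>2) * sin t)"
    unfolding S2_integral_def A_def by (simp only: expo_eq)
  have cf: "continuous_on rect (\<lambda>(t,p). exp (- A p * (sin t)\<^sup>2) * sin t)"
    unfolding A_def case_prod_unfold by (intro continuous_intros)
  have sin0: "0 \<le> sin t" if "t \<in> {0..pi}" for t using that by (auto intro: sin_ge_zero)
  have "S2_integral (\<lambda>x y z. exp (- n1 * x\<^sup>2 - n2 * y\<^sup>2))
           \<le> integral {0..2*pi} (\<lambda>p. pi\<^sup>2/4 * (1 / A p))"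
    unfolding eq
  proof (rule rect_upper[where g = "\<lambda>t p. (exp (- A p * (1 - cos t)) + exp (- A p * (1 + cos t))) * sin t"
        and G = "\<lambda>p. 2*(1-exp(-2*A p))/A p"])
    show "continuous_on rect (\<lambda>(t,p). (exp (- A p * (1 - cos t)) + exp (- A p * (1 + cos t))) * sin t)"
      unfolding A_def case_prod_unfold by (intro continuous_intros)
    show "exp (- A p * (sin t)\<^sup>2) * sin t \<le> (exp (- A p * (1 - cos t)) + exp (- A p * (1 + cos t))) * sin t"
      if "t \<in> {0..pi}" for t p
      using exp_upper[of "A p" t] A3[of p] sin0[OF that] by (intro mult_right_mono) auto
    show "integral {0..pi} (\<lambda>t. (exp (- A p * (1 - cos t)) + exp (- A p * (1 + cos t))) * sin t)
        = 2*(1-exp(-2*A p))/A p" for p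
    proof -
      have "integral {0..pi} (\<lambda>t. (exp (- A p * (1 - cos t)) + exp (- A p * (1 + cos t))) * sin t)
         = integral {0..pi} (\<lambda>t. exp (- A p * (1 - cos t)) * sin t + exp (- A p * (1 + cos t)) * sin t)"
        by (simp add: distrib_right)
      also have "\<dots> = integral {0..pi} (\<lambda>t. exp (- A p * (1 - cos t)) * sin t)
          + integral {0..pi} (\<lambda>t. exp (- A p * (1 + cos t)) * sin t)"
        by (rule int_add_cont) (intro continuous_intros)+
      also have "\<dots> = 2*(1-exp(-2*A p))/A p"
        using int_c[of "A p"] int_d[of "A p"] A3[of p] by (simp add: field_simps)
      finally show ?thesis .
    qed
    show "2*(1-exp(-2*A p))/A p \<le> pi\<^sup>2/4 * (1 / A p)" for p by (rule num1[OF A3])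
    show "continuous_on {0..2*pi} (\<lambda>p. 2*(1-exp(-2*A p))/A p)"
      using A0 by (intro continuous_intros Ac) auto
    show "continuous_on {0..2*pi} (\<lambda>p. pi\<^sup>2/4 * (1 / A p))"
      using A0 by (intro continuous_intros Ac) auto
  qed (rule cf)
  then show "S2_integral (\<lambda>x y z. exp (- n1 * x\<^sup>2 - n2 * y\<^sup>2))
           \<le> pi\<^sup>2/4 * integral {0..2*pi} (\<lambda>p. 1 / (n1 * (cos p)\<^sup>2 + n2 * (sin p)\<^sup>2))"
    unfolding A_def integral_mult_right .
  have "integral {0..2*pi} (\<lambda>p. 1/pi * (1 / A p)) \<le> S2_integral (\<lambda>x y z. exp (- n1 * x\<^sup>2 - n2 * y\<^sup>2))"
    unfolding eq
  proof (rule rect_lower[where g = "\<lambda>t p. exp (- (2 * A p) * (1 - cos t)) * sin t"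
        and G = "\<lambda>p. (1 - exp(-2*(2*A p)))/(2*A p)"])
    show "continuous_on rect (\<lambda>(t,p). exp (- (2 * A p) * (1 - cos t)) * sin t)"
      unfolding A_def case_prod_unfold by (intro continuous_intros)
    show "exp (- (2 * A p) * (1 - cos t)) * sin t \<le> exp (- A p * (sin t)\<^sup>2) * sin t"
      if "t \<in> {0..pi}" for t p
      using exp_lower[of "A p" t] A3[of p] sin0[OF that] by (intro mult_right_mono) auto
    show "integral {0..pi} (\<lambda>t. exp (- (2 * A p) * (1 - cos t)) * sin t) = (1 - exp(-2*(2*A p)))/(2*A p)" for p
      using int_c[of "2 * A p"] A3[of p] by simp
    show "1/pi * (1 / A p) \<le> (1 - exp(-2*(2*A p)))/(2*A p)" for p by (rule num2[OF A3])
    show "continuous_on {0..2*pi} (\<lambda>p. (1 - exp(-2*(2*A p)))/(2*A p))"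
      using A0 by (intro continuous_intros Ac) auto
    show "continuous_on {0..2*pi} (\<lambda>p. 1/pi * (1 / A p))"
      using A0 by (intro continuous_intros Ac) auto
  qed (rule cf)
  then show "1/pi * integral {0..2*pi} (\<lambda>p. 1 / (n1 * (cos p)\<^sup>2 + n2 * (sin p)\<^sup>2))
           \<le> S2_integral (\<lambda>x y z. exp (- n1 * x\<^sup>2 - n2 * y\<^sup>2))"
    unfolding A_def integral_mult_right .
qed

lemma Sq_bounds:
  fixes n1 n2 :: real and q :: "real \<Rightarrow> real"
  assumes "3 \<le> n1" "3 \<le> n2" "continuous_on UNIV q" "\<And>p. 0 \<le> q p"
  shows "4/pi^3 * integral {0..2*pi} (\<lambda>p. q p / (n1 * (cos p)\<^sup>2 + n2 * (sin p)\<^sup>2)\<^sup>2)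
           \<le> integral rect (\<lambda>(t,p). q p * ((sin t)^3 * exp (- (n1 * (cos p)\<^sup>2 + n2 * (sin p)\<^sup>2) * (sin t)\<^sup>2)))"
    "integral rect (\<lambda>(t,p). q p * ((sin t)^3 * exp (- (n1 * (cos p)\<^sup>2 + n2 * (sin p)\<^sup>2) * (sin t)\<^sup>2)))
           \<le> pi^4/16 * integral {0..2*pi} (\<lambda>p. q p / (n1 * (cos p)\<^sup>2 + n2 * (sin p)\<^sup>2)\<^sup>2)"
proof -
  define A where "A = (\<lambda>p. n1 * (cos p)\<^sup>2 + n2 * (sin p)\<^sup>2)"
  have A3: "3 \<le> A p" for p unfolding A_def by (rule A_ge[OF assms(1,2)])
  have A0: "A p \<noteq> 0" for p using A3[of p] by linarith
  have Ac: "continuous_on S A" for S unfolding A_def by (intro continuous_intros)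
  have qc: "continuous_on S q" for S using assms(3) continuous_on_subset by blast
  have qs: "continuous_on S (\<lambda>x. q (snd x))" for S :: "(real \<times> real) set"
    by (rule continuous_on_compose2[OF assms(3)]) (auto intro: continuous_intros)
  have cf: "continuous_on rect (\<lambda>(t,p). q p * ((sin t)^3 * exp (- A p * (sin t)\<^sup>2)))"
    unfolding A_def case_prod_unfold by (intro continuous_intros qc qs)
  have sin0: "0 \<le> sin t" if "t \<in> {0..pi}" for t using that by (auto intro: sin_ge_zero)
  have s3: "0 \<le> (sin t)^3" if "t \<in> {0..pi}" for t using sin0[OF that] by simp
  have "integral rect (\<lambda>(t,p). q p * ((sin t)^3 * exp (- A p * (sin t)\<^sup>2)))
           \<le> integral {0..2*pi} (\<lambda>p. pi^4/16 * (q p / (A p)\<^sup>2))"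
  proof (rule rect_upper[where g = "\<lambda>t p. q p * ((sin t)^3 * exp (- A p * (1 - cos t)) + (sin t)^3 * exp (- A p * (1 + cos t)))"
        and G = "\<lambda>p. q p * (2*(GG (A p) 2 - GG (A p) 0))"])
    show "continuous_on rect (\<lambda>(t,p). q p * ((sin t)^3 * exp (- A p * (1 - cos t)) + (sin t)^3 * exp (- A p * (1 + cos t))))"
      unfolding A_def case_prod_unfold by (intro continuous_intros qc qs)
    show "q p * ((sin t)^3 * exp (- A p * (sin t)\<^sup>2)) \<le> q p * ((sin t)^3 * exp (- A p * (1 - cos t)) + (sin t)^3 * exp (- A p * (1 + cos t)))"
      if "t \<in> {0..pi}" for t p
    proof -
      have "(sin t)^3 * exp (- A p * (sin t)\<^sup>2) \<le> (sin t)^3 * (exp (- A p * (1 - cos t)) + exp (- A p * (1 + cos t)))"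
        using exp_upper[of "A p" t] A3[of p] s3[OF that] by (intro mult_left_mono) auto
      then show ?thesis using assms(4)[of p] by (intro mult_left_mono) (auto simp: distrib_left)
    qed
    show "integral {0..pi} (\<lambda>t. q p * ((sin t)^3 * exp (- A p * (1 - cos t)) + (sin t)^3 * exp (- A p * (1 + cos t))))
        = q p * (2*(GG (A p) 2 - GG (A p) 0))" for p
    proof -
      have "integral {0..pi} (\<lambda>t. (sin t)^3 * exp (- A p * (1 - cos t)) + (sin t)^3 * exp (- A p * (1 + cos t)))
          = integral {0..pi} (\<lambda>t. (sin t)^3 * exp (- A p * (1 - cos t)))
          + integral {0..pi} (\<lambda>t. (sin t)^3 * exp (- A p * (1 + cos t)))"
        by (rule int_add_cont) (intro continuous_intros)+
      also have "\<dots> = 2*(GG (A p) 2 - GG (A p) 0)"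
        using int_e[of "A p"] int_f[of "A p"] A3[of p] by simp
      finally show ?thesis by simp
    qed
    show "q p * (2*(GG (A p) 2 - GG (A p) 0)) \<le> pi^4/16 * (q p / (A p)\<^sup>2)" for p
      using mult_left_mono[OF num3[OF A3[of p]] assms(4)[of p]] by (simp add: mult_ac)
    show "continuous_on {0..2*pi} (\<lambda>p. q p * (2*(GG (A p) 2 - GG (A p) 0)))"
      unfolding GG_def using A0 by (intro continuous_intros Ac qc) auto
    show "continuous_on {0..2*pi} (\<lambda>p. pi^4/16 * (q p / (A p)\<^sup>2))"
      using A0 by (intro continuous_intros Ac qc) auto
  qed (rule cf)
  then show "integral rect (\<lambda>(t,p). q p * ((sin t)^3 * exp (- (n1 * (cos p)\<^sup>2 + n2 * (sin p)\<^sup>2) * (sin t)\<^sup>2)))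
           \<le> pi^4/16 * integral {0..2*pi} (\<lambda>p. q p / (n1 * (cos p)\<^sup>2 + n2 * (sin p)\<^sup>2)\<^sup>2)"
    unfolding A_def integral_mult_right .
  have "integral {0..2*pi} (\<lambda>p. 4/pi^3 * (q p / (A p)\<^sup>2)) \<le> integral rect (\<lambda>(t,p). q p * ((sin t)^3 * exp (- A p * (sin t)\<^sup>2)))"
  proof (rule rect_lower[where g = "\<lambda>t p. q p * ((sin t)^3 * exp (- (2 * A p) * (1 - cos t)))"
        and G = "\<lambda>p. q p * (GG (2 * A p) 2 - GG (2 * A p) 0)"])
    show "continuous_on rect (\<lambda>(t,p). q p * ((sin t)^3 * exp (- (2 * A p) * (1 - cos t))))"
      unfolding A_def case_prod_unfold by (intro continuous_intros qc qs)
    show "q p * ((sin t)^3 * exp (- (2 * A p) * (1 - cos t))) \<le> q p * ((sin t)^3 * exp (- A p * (sin t)\<^sup>2))"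
      if "t \<in> {0..pi}" for t p
      using exp_lower[of "A p" t] A3[of p] s3[OF that] assms(4)[of p]
      by (intro mult_left_mono) auto
    show "integral {0..pi} (\<lambda>t. q p * ((sin t)^3 * exp (- (2 * A p) * (1 - cos t)))) = q p * (GG (2 * A p) 2 - GG (2 * A p) 0)" for p
      using int_e[of "2 * A p"] A3[of p] by simp
    show "4/pi^3 * (q p / (A p)\<^sup>2) \<le> q p * (GG (2 * A p) 2 - GG (2 * A p) 0)" for p
      using mult_left_mono[OF num4[OF A3[of p]] assms(4)[of p]] by (simp add: mult_ac)
    show "continuous_on {0..2*pi} (\<lambda>p. q p * (GG (2 * A p) 2 - GG (2 * A p) 0))"
      unfolding GG_def using A0 by (intro continuous_intros Ac qc) auto
    show "continuous_on {0..2*pi} (\<lambda>p. 4/pi^3 * (q p / (A p)\<^sup>2))"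
      using A0 by (intro continuous_intros Ac qc) auto
  qed (rule cf)
  then show "4/pi^3 * integral {0..2*pi} (\<lambda>p. q p / (n1 * (cos p)\<^sup>2 + n2 * (sin p)\<^sup>2)\<^sup>2)
           \<le> integral rect (\<lambda>(t,p). q p * ((sin t)^3 * exp (- (n1 * (cos p)\<^sup>2 + n2 * (sin p)\<^sup>2) * (sin t)\<^sup>2)))"
    unfolding A_def integral_mult_right .
qed

lemma Sx_eq: "S2_integral (\<lambda>x y z. x\<^sup>2 * exp (- n1 * x\<^sup>2 - n2 * y\<^sup>2))
  = integral rect (\<lambda>(t,p). (cos p)\<^sup>2 * ((sin t)^3 * exp (- (n1 * (cos p)\<^sup>2 + n2 * (sin p)\<^sup>2) * (sin t)\<^sup>2)))"
  unfolding S2_integral_def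
  by (simp only: expo_eq) (simp add: power_mult_distrib power3_eq_cube power2_eq_square mult_ac)

lemma Sy_eq: "S2_integral (\<lambda>x y z. y\<^sup>2 * exp (- n1 * x\<^sup>2 - n2 * y\<^sup>2))
  = integral rect (\<lambda>(t,p). (sin p)\<^sup>2 * ((sin t)^3 * exp (- (n1 * (cos p)\<^sup>2 + n2 * (sin p)\<^sup>2) * (sin t)\<^sup>2)))"
  unfolding S2_integral_def
  by (simp only: expo_eq) (simp add: power_mult_distrib power3_eq_cube power2_eq_square mult_ac)

lemma zero_t:
  fixes P Pt :: "real \<Rightarrow> real \<Rightarrow> real"
  assumes "continuous_on rect (\<lambda>(t,p). Pt t p)"
    "\<And>t p. ((\<lambda>t. P t p) has_real_derivative Pt t p) (at t)"
    "\<And>p. P 0 p = 0" "\<And>p. P pi p = 0"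
  shows "integral rect (\<lambda>(t,p). Pt t p) = 0"
proof -
  have "integral rect (\<lambda>(t,p). Pt t p) = integral {0..2*pi} (\<lambda>p. integral {0..pi} (\<lambda>t. Pt t p))"
    by (rule fub_p[OF assms(1)])
  also have "\<dots> = integral {0..2*pi} (\<lambda>p. 0)"
  proof (rule integral_cong)
    fix p
    have "integral {0..pi} (\<lambda>t. Pt t p) = P pi p - P 0 p"
      by (rule ftc_real[where F = "\<lambda>t. P t p"]) (use assms(2) in auto)
    then show "integral {0..pi} (\<lambda>t. Pt t p) = 0" using assms(3,4) by simp
  qed
  finally show ?thesis by simp
qed

lemma zero_p:
  fixes R Rp :: "real \<Rightarrow> real \<Rightarrow> real"
  assumes "continuous_on rect (\<lambda>(t,p). Rp t p)"
    "\<And>t p. ((\<lambda>p. R t p) has_real_derivative Rp t p) (at p)"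
    "\<And>t. R t 0 = 0" "\<And>t. R t (2*pi) = 0"
  shows "integral rect (\<lambda>(t,p). Rp t p) = 0"
proof -
  have "integral rect (\<lambda>(t,p). Rp t p) = integral {0..pi} (\<lambda>t. integral {0..2*pi} (\<lambda>p. Rp t p))"
    by (rule fub_t[OF assms(1)])
  also have "\<dots> = integral {0..pi} (\<lambda>t. 0)"
  proof (rule integral_cong)
    fix t
    have "integral {0..2*pi} (\<lambda>p. Rp t p) = R t (2*pi) - R t 0"
      by (rule ftc_real[where F = "\<lambda>p. R t p"]) (use assms(2) in auto)
    then show "integral {0..2*pi} (\<lambda>p. Rp t p) = 0" using assms(3,4) by simp
  qed
  finally show ?thesis by simp
qed

definition ww :: "real \<Rightarrow> real \<Rightarrow> real \<Rightarrow> real \<Rightarrow> real" where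
  "ww n1 n2 t p = exp (- (n1 * (cos p)\<^sup>2 + n2 * (sin p)\<^sup>2) * (sin t)\<^sup>2)"

lemma ww_cont: "continuous_on S (\<lambda>x. ww n1 n2 (fst x) (snd x))"
  unfolding ww_def by (intro continuous_intros)

lemma ww_dt: "((\<lambda>t. ww n1 n2 t p) has_real_derivative
   ww n1 n2 t p * (- (n1 * (cos p)\<^sup>2 + n2 * (sin p)\<^sup>2) * (2 * sin t * cos t))) (at t)"
  unfolding ww_def by (auto intro!: derivative_eq_intros simp: power2_eq_square algebra_simps)

lemma ww_dp: "((\<lambda>p. ww n1 n2 t p) has_real_derivative
   ww n1 n2 t p * (- (2 * (n2 - n1) * sin p * cos p) * (sin t)\<^sup>2)) (at p)"
  unfolding ww_def by (auto intro!: derivative_eq_intros simp: power2_eq_square algebra_simps)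

lemma idY: "integral rect (\<lambda>(t,p). ((cos t)\<^sup>2 - (sin t)\<^sup>2*(cos p)\<^sup>2 - 2*n1*(sin t)\<^sup>2*(cos p)\<^sup>2*(cos t)\<^sup>2) * ww n1 n2 t p * sin t) = 0"
proof -
  define P where "P t p = (sin t)\<^sup>2 * cos t * (cos p)\<^sup>2 * ww n1 n2 t p" for t p
  define Pt where "Pt t p = (cos p)\<^sup>2 * sin t * ww n1 n2 t p * (2*(cos t)\<^sup>2 - (sin t)\<^sup>2 - 2*(n1*(cos p)\<^sup>2+n2*(sin p)\<^sup>2)*(sin t)\<^sup>2*(cos t)\<^sup>2)" for t p
  define R where "R t p = sin t * (cos t)\<^sup>2 * sin p * cos p * ww n1 n2 t p" for t p
  define Rp where "Rp t p = sin t * (cos t)\<^sup>2 * ww n1 n2 t p * ((cos p)\<^sup>2 - (sin p)\<^sup>2 - 2*(n2-n1)*(sin p)\<^sup>2*(cos p)\<^sup>2*(sin t)\<^sup>2)" for t p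
  have dP: "((\<lambda>t. P t p) has_real_derivative Pt t p) (at t)" for t p
    unfolding P_def Pt_def
    by (auto intro!: derivative_eq_intros ww_dt simp: power2_eq_square algebra_simps)
  have dR: "((\<lambda>p. R t p) has_real_derivative Rp t p) (at p)" for t p
    unfolding R_def Rp_def
    by (auto intro!: derivative_eq_intros ww_dp simp: power2_eq_square algebra_simps)
  have cPt: "continuous_on rect (\<lambda>(t,p). Pt t p)"
    unfolding Pt_def case_prod_unfold by (intro continuous_intros ww_cont)
  have cRp: "continuous_on rect (\<lambda>(t,p). Rp t p)"
    unfolding Rp_def case_prod_unfold by (intro continuous_intros ww_cont)
  have h: "((cos t)\<^sup>2 - (sin t)\<^sup>2*(cos p)\<^sup>2 - 2*n1*(sin t)\<^sup>2*(cos p)\<^sup>2*(cos t)\<^sup>2) * ww n1 n2 t p * sin t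
     = Pt t p - Rp t p" for t p
  proof -
    have sc: "(sin p)\<^sup>2 = 1 - (cos p)\<^sup>2" by (simp add: sin_squared_eq)
    show ?thesis unfolding Pt_def Rp_def sc by (simp add: algebra_simps power2_eq_square)
  qed
  have "integral rect (\<lambda>(t,p). ((cos t)\<^sup>2 - (sin t)\<^sup>2*(cos p)\<^sup>2 - 2*n1*(sin t)\<^sup>2*(cos p)\<^sup>2*(cos t)\<^sup>2) * ww n1 n2 t p * sin t)
     = integral rect (\<lambda>x. (\<lambda>(t,p). Pt t p) x - (\<lambda>(t,p). Rp t p) x)"
    by (simp add: h case_prod_unfold)
  also have "\<dots> = integral rect (\<lambda>(t,p). Pt t p) - integral rect (\<lambda>(t,p). Rp t p)"
    by (rule integral_diff[OF rect_integrable[OF cPt] rect_integrable[OF cRp]])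
  also have "\<dots> = 0"
    using zero_t[OF cPt dP] zero_p[OF cRp dR] by (simp add: P_def R_def)
  finally show ?thesis .
qed

lemma idX: "integral rect (\<lambda>(t,p). ((cos t)\<^sup>2 - (sin t)\<^sup>2*(sin p)\<^sup>2 - 2*n2*(sin t)\<^sup>2*(sin p)\<^sup>2*(cos t)\<^sup>2) * ww n1 n2 t p * sin t) = 0"
proof -
  define P where "P t p = (sin t)\<^sup>2 * cos t * (sin p)\<^sup>2 * ww n1 n2 t p" for t p
  define Pt where "Pt t p = (sin p)\<^sup>2 * sin t * ww n1 n2 t p * (2*(cos t)\<^sup>2 - (sin t)\<^sup>2 - 2*(n1*(cos p)\<^sup>2+n2*(sin p)\<^sup>2)*(sin t)\<^sup>2*(cos t)\<^sup>2)" for t p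
  define R where "R t p = sin t * (cos t)\<^sup>2 * sin p * cos p * ww n1 n2 t p" for t p
  define Rp where "Rp t p = sin t * (cos t)\<^sup>2 * ww n1 n2 t p * ((cos p)\<^sup>2 - (sin p)\<^sup>2 - 2*(n2-n1)*(sin p)\<^sup>2*(cos p)\<^sup>2*(sin t)\<^sup>2)" for t p
  have dP: "((\<lambda>t. P t p) has_real_derivative Pt t p) (at t)" for t p
    unfolding P_def Pt_def
    by (auto intro!: derivative_eq_intros ww_dt simp: power2_eq_square algebra_simps)
  have dR: "((\<lambda>p. R t p) has_real_derivative Rp t p) (at p)" for t p
    unfolding R_def Rp_def
    by (auto intro!: derivative_eq_intros ww_dp simp: power2_eq_square algebra_simps)
  have cPt: "continuous_on rect (\<lambda>(t,p). Pt t p)"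
    unfolding Pt_def case_prod_unfold by (intro continuous_intros ww_cont)
  have cRp: "continuous_on rect (\<lambda>(t,p). Rp t p)"
    unfolding Rp_def case_prod_unfold by (intro continuous_intros ww_cont)
  have h: "((cos t)\<^sup>2 - (sin t)\<^sup>2*(sin p)\<^sup>2 - 2*n2*(sin t)\<^sup>2*(sin p)\<^sup>2*(cos t)\<^sup>2) * ww n1 n2 t p * sin t
     = Pt t p + Rp t p" for t p
  proof -
    have sc: "(cos p)\<^sup>2 = 1 - (sin p)\<^sup>2" by (simp add: cos_squared_eq)
    show ?thesis unfolding Pt_def Rp_def sc by (simp add: algebra_simps power2_eq_square)
  qed
  have "integral rect (\<lambda>(t,p). ((cos t)\<^sup>2 - (sin t)\<^sup>2*(sin p)\<^sup>2 - 2*n2*(sin t)\<^sup>2*(sin p)\<^sup>2*(cos t)\<^sup>2) * ww n1 n2 t p * sin t)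
     = integral rect (\<lambda>x. (\<lambda>(t,p). Pt t p) x + (\<lambda>(t,p). Rp t p) x)"
    by (simp add: h case_prod_unfold)
  also have "\<dots> = integral rect (\<lambda>(t,p). Pt t p) + integral rect (\<lambda>(t,p). Rp t p)"
    by (rule integral_add[OF rect_integrable[OF cPt] rect_integrable[OF cRp]])
  also have "\<dots> = 0"
    using zero_t[OF cPt dP] zero_p[OF cRp dR] by (simp add: P_def R_def)
  finally show ?thesis .
qed

lemma exp_split:
  fixes m1 m2 m3 t p :: real
  assumes "m1 + m2 + m3 = 0"
  shows "exp (m1 * (sin t * cos p)\<^sup>2 + m2 * (sin t * sin p)\<^sup>2 + m3 * (cos t)\<^sup>2)
    = exp m3 * ww (-(2*m1+m2)) (-(m1+2*m2)) t p"
proof -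
  have m3: "m3 = - m1 - m2" using assms by linarith
  have ct: "(cos t)\<^sup>2 = 1 - (sin t)\<^sup>2" by (simp add: cos_squared_eq)
  have cp: "(cos p)\<^sup>2 = 1 - (sin p)\<^sup>2" by (simp add: cos_squared_eq)
  have "m1 * (sin t * cos p)\<^sup>2 + m2 * (sin t * sin p)\<^sup>2 + m3 * (cos t)\<^sup>2
      = m3 + (- ((-(2*m1+m2)) * (cos p)\<^sup>2 + (-(m1+2*m2)) * (sin p)\<^sup>2) * (sin t)\<^sup>2)"
    unfolding power_mult_distrib ct cp m3 by (simp add: algebra_simps)
  then show ?thesis unfolding ww_def by (simp add: exp_add)
qed

lemma S2_moment:
  fixes m1 m2 m3 Z :: real and f :: "real \<Rightarrow> real \<Rightarrow> real \<Rightarrow> real"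
  assumes "m1 + m2 + m3 = 0"
  shows "S2_integral (\<lambda>x y z. f x y z * exp (m1 * x\<^sup>2 + m2 * y\<^sup>2 + m3 * z\<^sup>2) / Z)
    = exp m3 / Z * integral rect (\<lambda>(t,p). f (sin t * cos p) (sin t * sin p) (cos t) * (ww (-(2*m1+m2)) (-(m1+2*m2)) t p * sin t))"
proof -
  have "(\<lambda>(t,p). f (sin t * cos p) (sin t * sin p) (cos t) * exp (m1 * (sin t * cos p)\<^sup>2 + m2 * (sin t * sin p)\<^sup>2 + m3 * (cos t)\<^sup>2) / Z * sin t)
     = (\<lambda>(t,p). exp m3 / Z * (f (sin t * cos p) (sin t * sin p) (cos t) * (ww (-(2*m1+m2)) (-(m1+2*m2)) t p * sin t)))"
    by (auto simp: fun_eq_iff exp_split[OF assms])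
  then show ?thesis unfolding S2_integral_def by (simp only: case_prod_unfold integral_mult_right)
qed

lemma S2_Z:
  fixes m1 m2 m3 :: real
  assumes "m1 + m2 + m3 = 0"
  shows "S2_integral (\<lambda>x y z. exp (m1 * x\<^sup>2 + m2 * y\<^sup>2 + m3 * z\<^sup>2))
    = exp m3 * integral rect (\<lambda>(t,p). ww (-(2*m1+m2)) (-(m1+2*m2)) t p * sin t)"
proof -
  have "(\<lambda>(t,p). exp (m1 * (sin t * cos p)\<^sup>2 + m2 * (sin t * sin p)\<^sup>2 + m3 * (cos t)\<^sup>2) * sin t)
     = (\<lambda>(t,p). exp m3 * (ww (-(2*m1+m2)) (-(m1+2*m2)) t p * sin t))"
    by (auto simp: fun_eq_iff exp_split[OF assms])
  then show ?thesis unfolding S2_integral_def by (simp only: case_prod_unfold integral_mult_right)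
qed

lemma lin3:
  fixes f g h :: "real \<times> real \<Rightarrow> real"
  assumes "continuous_on rect f" "continuous_on rect g" "continuous_on rect h"
  shows "integral rect (\<lambda>x. f x - g x - c * h x) = integral rect f - integral rect g - c * integral rect h"
proof -
  have i: "f integrable_on rect" "g integrable_on rect" "(\<lambda>x. c * h x) integrable_on rect"
    using rect_integrable assms by (auto intro!: rect_integrable continuous_intros)
  have "integral rect (\<lambda>x. f x - g x - c * h x) = integral rect (\<lambda>x. f x - g x) - integral rect (\<lambda>x. c * h x)"
    by (rule integral_diff) (use i in \<open>auto intro: integrable_diff\<close>)
  also have "\<dots> = integral rect f - integral rect g - c * integral rect h"
    using integral_diff[OF i(1,2)] by simp
  finally show ?thesis .
qed

lemma ww_pos: "0 < ww n1 n2 t p" unfolding ww_def by simp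

lemma arith_core:
  fixes K Mz Mx Mxz n :: real
  assumes "0 \<le> K" "Mz - Mx - 2*n*Mxz = 0" "0 \<le> Mxz" "Mxz \<le> Mx" "n < 3"
  shows "K*Mz \<le> 7*(K*Mx)"
proof -
  have e: "K*Mz = K*Mx + 2*n*(K*Mxz)" using assms(2)
    by (metis (no_types, opaque_lifting) add.commute diff_add_cancel diff_diff_eq2 diff_zero distrib_left mult.left_commute)
  have u0: "0 \<le> K*Mxz" using assms by simp
  have u1: "K*Mxz \<le> K*Mx" using assms by (intro mult_left_mono) auto
  have "n*(K*Mxz) \<le> 3*(K*Mxz)" using u0 assms(5) by (intro mult_right_mono) auto
  then show ?thesis using e u1 by linarith
qed

lemma nu_bounds:
  fixes l1 l2 l3 m1 m2 m3 :: real
  assumes "- 1/3 < l1" "l1 \<le> l2" "l2 + 1/3 < 1/9" "l1 + l2 + l3 = 0" "BM_multipliers l1 l2 l3 m1 m2 m3"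
  shows "3 \<le> -(2*m1+m2) \<and> 3 \<le> -(m1+2*m2)"
proof -
  define n1 where "n1 = -(2*m1+m2)"
  define n2 where "n2 = -(m1+2*m2)"
  define Z where "Z = S2_integral (\<lambda>x y z. exp (m1 * x\<^sup>2 + m2 * y\<^sup>2 + m3 * z\<^sup>2))"
  define K where "K = exp m3 / Z"
  have bm: "m1 + m2 + m3 = 0"
    "S2_integral (\<lambda>x y z. x\<^sup>2 * exp (m1 * x\<^sup>2 + m2 * y\<^sup>2 + m3 * z\<^sup>2) / Z) = l1 + 1/3"
    "S2_integral (\<lambda>x y z. y\<^sup>2 * exp (m1 * x\<^sup>2 + m2 * y\<^sup>2 + m3 * z\<^sup>2) / Z) = l2 + 1/3"
    "S2_integral (\<lambda>x y z. z\<^sup>2 * exp (m1 * x\<^sup>2 + m2 * y\<^sup>2 + m3 * z\<^sup>2) / Z) = l3 + 1/3"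
    using assms(5) unfolding BM_multipliers_def Let_def Z_def by auto
  define W where "W = (\<lambda>(t::real,p::real). ww n1 n2 t p * sin t)"
  have Wc: "continuous_on rect W" unfolding W_def case_prod_unfold by (intro continuous_intros ww_cont)
  have W0: "0 \<le> W x" if "x \<in> rect" for x
    using that ww_pos[of n1 n2, THEN less_imp_le] unfolding W_def by (auto intro!: mult_nonneg_nonneg sin_ge_zero)
  define fx where "fx = (\<lambda>(t::real,p::real). (sin t * cos p)\<^sup>2)"
  define fy where "fy = (\<lambda>(t::real,p::real). (sin t * sin p)\<^sup>2)"
  define fz where "fz = (\<lambda>(t::real,p::real). (cos t)\<^sup>2)"
  have fc: "continuous_on rect fx" "continuous_on rect fy" "continuous_on rect fz"
    unfolding fx_def fy_def fz_def case_prod_unfold by (intro continuous_intros)+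
  have W': "W = (\<lambda>(t,p). ww (-(2*m1+m2)) (-(m1+2*m2)) t p * sin t)" unfolding W_def n1_def n2_def ..
  have mx: "K * integral rect (\<lambda>x. fx x * W x) = l1 + 1/3"
    using S2_moment[OF bm(1), of "\<lambda>x y z. x\<^sup>2" Z] bm(2) unfolding K_def fx_def W'
    by (simp add: case_prod_unfold)
  have my: "K * integral rect (\<lambda>x. fy x * W x) = l2 + 1/3"
    using S2_moment[OF bm(1), of "\<lambda>x y z. y\<^sup>2" Z] bm(3) unfolding K_def fy_def W'
    by (simp add: case_prod_unfold)
  have mz: "K * integral rect (\<lambda>x. fz x * W x) = l3 + 1/3"
    using S2_moment[OF bm(1), of "\<lambda>x y z. z\<^sup>2" Z] bm(4) unfolding K_def fz_def W'
    by (simp add: case_prod_unfold)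
  have M1: "0 \<le> integral rect W"
    by (rule integral_nonneg[OF rect_integrable[OF Wc]]) (use W0 in auto)
  have Zeq: "Z = exp m3 * integral rect W" unfolding Z_def W' using S2_Z[OF bm(1)] by (simp add: case_prod_unfold)
  have K0: "0 \<le> K" unfolding K_def Zeq using M1 by simp
  have sq_le: "0 \<le> f x * (cos (fst x))\<^sup>2 * W x \<and> f x * (cos (fst x))\<^sup>2 * W x \<le> f x * W x"
    if "x \<in> rect" "\<And>x. 0 \<le> f x" for f x
  proof -
    have "0 \<le> f x * W x" using that W0 by simp
    moreover have "(cos (fst x))\<^sup>2 \<le> 1" by (simp add: cos_squared_eq)
    ultimately show ?thesis
      by (metis (no_types, lifting) mult.assoc mult.commute mult_left_le_one_le zero_le_power2 mult_nonneg_nonneg)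
  qed
  have n1ge: "3 \<le> n1"
  proof (rule ccontr)
    assume "\<not> 3 \<le> n1"
    have id: "integral rect (\<lambda>x. fz x * W x) - integral rect (\<lambda>x. fx x * W x)
        - 2*n1 * integral rect (\<lambda>x. fx x * (cos (fst x))\<^sup>2 * W x) = 0"
    proof -
      have "integral rect (\<lambda>x. fz x * W x - fx x * W x - (2*n1) * (fx x * (cos (fst x))\<^sup>2 * W x)) = 0"
        using idY[of n1 n2] unfolding fx_def fz_def W_def case_prod_unfold
        by (simp add: power_mult_distrib algebra_simps)
      then show ?thesis
        by (subst (asm) lin3) (use fc Wc in \<open>auto intro!: continuous_intros\<close>)
    qed
    have le: "integral rect (\<lambda>x. fx x * (cos (fst x))\<^sup>2 * W x) \<le> integral rect (\<lambda>x. fx x * W x)"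
      by (rule integral_le) (use sq_le[of _ fx] fc Wc in \<open>auto intro!: rect_integrable continuous_intros simp: fx_def\<close>)
    have ge: "0 \<le> integral rect (\<lambda>x. fx x * (cos (fst x))\<^sup>2 * W x)"
      by (rule integral_nonneg) (use sq_le[of _ fx] fc Wc in \<open>auto intro!: rect_integrable continuous_intros simp: fx_def\<close>)
    have "l3 + 1/3 \<le> 7 * (l1 + 1/3)"
      using arith_core[OF K0 id ge le] \<open>\<not> 3 \<le> n1\<close> mx mz by simp
    then show False using assms(1-4) by (simp add: field_simps)
  qed
  have n2ge: "3 \<le> n2"
  proof (rule ccontr)
    assume "\<not> 3 \<le> n2"
    have id: "integral rect (\<lambda>x. fz x * W x) - integral rect (\<lambda>x. fy x * W x)
        - 2*n2 * integral rect (\<lambda>x. fy x * (cos (fst x))\<^sup>2 * W x) = 0"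
    proof -
      have "integral rect (\<lambda>x. fz x * W x - fy x * W x - (2*n2) * (fy x * (cos (fst x))\<^sup>2 * W x)) = 0"
        using idX[of n2 n1] unfolding fy_def fz_def W_def case_prod_unfold
        by (simp add: power_mult_distrib algebra_simps)
      then show ?thesis
        by (subst (asm) lin3) (use fc Wc in \<open>auto intro!: continuous_intros\<close>)
    qed
    have le: "integral rect (\<lambda>x. fy x * (cos (fst x))\<^sup>2 * W x) \<le> integral rect (\<lambda>x. fy x * W x)"
      by (rule integral_le) (use sq_le[of _ fy] fc Wc in \<open>auto intro!: rect_integrable continuous_intros simp: fy_def\<close>)
    have ge: "0 \<le> integral rect (\<lambda>x. fy x * (cos (fst x))\<^sup>2 * W x)"
      by (rule integral_nonneg) (use sq_le[of _ fy] fc Wc in \<open>auto intro!: rect_integrable continuous_intros simp: fy_def\<close>)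
    have "l3 + 1/3 \<le> 7 * (l2 + 1/3)"
      using arith_core[OF K0 id ge le] \<open>\<not> 3 \<le> n2\<close> my mz by simp
    then show False using assms(1-4) by (simp add: field_simps)
  qed
  show ?thesis using n1ge n2ge unfolding n1_def n2_def by simp
qed

lemma body:
  fixes n1 n2 :: real
  assumes "3 \<le> n1" "3 \<le> n2"
  shows "let A = (\<lambda>p. n1 * (cos p)\<^sup>2 + n2 * (sin p)\<^sup>2);
         I0 = integral {0..2*pi} (\<lambda>p. 1 / A p);
         Ix = integral {0..2*pi} (\<lambda>p. (cos p)\<^sup>2 / (A p)\<^sup>2);
         Iy = integral {0..2*pi} (\<lambda>p. (sin p)\<^sup>2 / (A p)\<^sup>2);
         S0 = S2_integral (\<lambda>x y z. exp (- n1 * x\<^sup>2 - n2 * y\<^sup>2));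
         Sx = S2_integral (\<lambda>x y z. x\<^sup>2 * exp (- n1 * x\<^sup>2 - n2 * y\<^sup>2));
         Sy = S2_integral (\<lambda>x y z. y\<^sup>2 * exp (- n1 * x\<^sup>2 - n2 * y\<^sup>2))
     in (1 / pi) * I0 \<le> S0 \<and> S0 \<le> (pi\<^sup>2 / 4) * I0 \<and>
        (4 / pi ^ 3) * Ix \<le> Sx \<and> Sx \<le> (pi ^ 4 / 16) * Ix \<and>
        (4 / pi ^ 3) * Iy \<le> Sy \<and> Sy \<le> (pi ^ 4 / 16) * Iy"
proof -
  have qc: "continuous_on UNIV (\<lambda>p::real. (cos p)\<^sup>2)" "continuous_on UNIV (\<lambda>p::real. (sin p)\<^sup>2)"
    by (intro continuous_intros)+
  note X = Sq_bounds[OF assms qc(1)] Sq_bounds[OF assms qc(2)]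
  show ?thesis unfolding Let_def Sx_eq Sy_eq
    using S0_bounds[OF assms] X by simp
qed

theorem lemma2p4:
  shows "\<exists>\<delta>0 > (0::real). \<forall>l1 l2 l3 m1 m2 m3 :: real.
    (- 1/3 < l1 \<and> l1 \<le> l2 \<and> l2 \<le> l3 \<and> l3 < 2/3 \<and> l1 + l2 + l3 = 0 \<and>
     l2 + 1/3 < \<delta>0 \<and> BM_multipliers l1 l2 l3 m1 m2 m3) \<longrightarrow>
    (let n1 = - (2 * m1 + m2); n2 = - (m1 + 2 * m2);
         A = (\<lambda>p. n1 * (cos p)\<^sup>2 + n2 * (sin p)\<^sup>2);
         I0 = integral {0..2*pi} (\<lambda>p. 1 / A p);
         Ix = integral {0..2*pi} (\<lambda>p. (cos p)\<^sup>2 / (A p)\<^sup>2);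
         Iy = integral {0..2*pi} (\<lambda>p. (sin p)\<^sup>2 / (A p)\<^sup>2);
         S0 = S2_integral (\<lambda>x y z. exp (- n1 * x\<^sup>2 - n2 * y\<^sup>2));
         Sx = S2_integral (\<lambda>x y z. x\<^sup>2 * exp (- n1 * x\<^sup>2 - n2 * y\<^sup>2));
         Sy = S2_integral (\<lambda>x y z. y\<^sup>2 * exp (- n1 * x\<^sup>2 - n2 * y\<^sup>2))
     in (1 / pi) * I0 \<le> S0 \<and> S0 \<le> (pi\<^sup>2 / 4) * I0 \<and>
        (4 / pi ^ 3) * Ix \<le> Sx \<and> Sx \<le> (pi ^ 4 / 16) * Ix \<and>
        (4 / pi ^ 3) * Iy \<le> Sy \<and> Sy \<le> (pi ^ 4 / 16) * Iy)"
proof (intro exI[of _ "1/9::real"] conjI allI impI)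
  show "(0::real) < 1/9" by simp
  fix l1 l2 l3 m1 m2 m3 :: real
  assume H: "- 1/3 < l1 \<and> l1 \<le> l2 \<and> l2 \<le> l3 \<and> l3 < 2/3 \<and> l1 + l2 + l3 = 0 \<and>
     l2 + 1/3 < 1/9 \<and> BM_multipliers l1 l2 l3 m1 m2 m3"
  then have nb: "3 \<le> -(2*m1+m2)" "3 \<le> -(m1+2*m2)" using nu_bounds[of l1 l2 l3 m1 m2 m3] by auto
  have "let n1 = - (2 * m1 + m2); n2 = - (m1 + 2 * m2) in
       (let A = (\<lambda>p. n1 * (cos p)\<^sup>2 + n2 * (sin p)\<^sup>2);
         I0 = integral {0..2*pi} (\<lambda>p. 1 / A p);
         Ix = integral {0..2*pi} (\<lambda>p. (cos p)\<^sup>2 / (A p)\<^sup>2);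
         Iy = integral {0..2*pi} (\<lambda>p. (sin p)\<^sup>2 / (A p)\<^sup>2);
         S0 = S2_integral (\<lambda>x y z. exp (- n1 * x\<^sup>2 - n2 * y\<^sup>2));
         Sx = S2_integral (\<lambda>x y z. x\<^sup>2 * exp (- n1 * x\<^sup>2 - n2 * y\<^sup>2));
         Sy = S2_integral (\<lambda>x y z. y\<^sup>2 * exp (- n1 * x\<^sup>2 - n2 * y\<^sup>2))
     in (1 / pi) * I0 \<le> S0 \<and> S0 \<le> (pi\<^sup>2 / 4) * I0 \<and>
        (4 / pi ^ 3) * Ix \<le> Sx \<and> Sx \<le> (pi ^ 4 / 16) * Ix \<and>
        (4 / pi ^ 3) * Iy \<le> Sy \<and> Sy \<le> (pi ^ 4 / 16) * Iy)"
    unfolding Let_def[of "- (2 * m1 + m2)"] Let_def[of "- (m1 + 2 * m2)"] by (rule body[OF nb])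
  then show "(let n1 = - (2 * m1 + m2); n2 = - (m1 + 2 * m2);
         A = (\<lambda>p. n1 * (cos p)\<^sup>2 + n2 * (sin p)\<^sup>2);
         I0 = integral {0..2*pi} (\<lambda>p. 1 / A p);
         Ix = integral {0..2*pi} (\<lambda>p. (cos p)\<^sup>2 / (A p)\<^sup>2);
         Iy = integral {0..2*pi} (\<lambda>p. (sin p)\<^sup>2 / (A p)\<^sup>2);
         S0 = S2_integral (\<lambda>x y z. exp (- n1 * x\<^sup>2 - n2 * y\<^sup>2));
         Sx = S2_integral (\<lambda>x y z. x\<^sup>2 * exp (- n1 * x\<^sup>2 - n2 * y\<^sup>2));
         Sy = S2_integral (\<lambda>x y z. y\<^sup>2 * exp (- n1 * x\<^sup>2 - n2 * y\<^sup>2))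
     in (1 / pi) * I0 \<le> S0 \<and> S0 \<le> (pi\<^sup>2 / 4) * I0 \<and>
        (4 / pi ^ 3) * Ix \<le> Sx \<and> Sx \<le> (pi ^ 4 / 16) * Ix \<and>
        (4 / pi ^ 3) * Iy \<le> Sy \<and> Sy \<le> (pi ^ 4 / 16) * Iy)" .
qed

end
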